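(* Let $\mathcal N_1,\mathcal N_2,\mathcal N_3$ be nested graphs and let $\phi:\mathcal N_1\to\mathcal N_2$ and $\psi:\mathcal N_2\to\mathcal N_3$ be admissible functors. Then the composite $\psi\circ\phi:\mathcal N_1\to\mathcal N_3$ is admissible.
   Context: A nested graph is a small category $\mathcal N$ for which there exists at least one functor $G:\mathcal N\to\underline n$ to a finite ordinal $\underline n$ (viewed as the category with a unique morphism $i\to j$ when $i\le j$ and none otherwise) sending every non-identity morphism to a non-identity morphism. Objects of a nested graph are called nodes. A flag is a non-identity morphism; a flag is said to be decorated by its domain. A flag is irreducible if it cannot be written as a composite of two flags. A functor $\phi:\mathcal N_1\to\mathcal N_2$ contracts a flag $f$ if $\phi(f)$ is an identity. A functor $\phi:\mathcal N_1\to\mathcal N_2$ between nested graphs is admissible if (1) for every irreducible flag $f$ of $\mathcal N_1$, $\phi(f)$ is either an identity or an irreducible flag, and (2) for every irreducible flag $f:A\to B$ of $\mathcal N_1$, if $\phi$ contracts $f$ then $\phi$ contracts every irreducible flag decorated by $A$ (i.e. with domain $A$). *)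

theory Defs
  imports Main
begin

text \<open>Small categories, presented by a set of objects, a set of arrows,
  domain/codomain maps, identities and composition (cComp g f = g o f,
  defined when cCod f = cDom g).\<close>

record ('o, 'm) cat =
  cObj  :: "'o set"
  cArr  :: "'m set"
  cDom  :: "'m \<Rightarrow> 'o"
  cCod  :: "'m \<Rightarrow> 'o"
  cId   :: "'o \<Rightarrow> 'm"
  cComp :: "'m \<Rightarrow> 'm \<Rightarrow> 'm"

definition category :: "('o, 'm) cat \<Rightarrow> bool" where
  "category C \<longleftrightarrow>
     (\<forall>f\<in>cArr C. cDom C f \<in> cObj C \<and> cCod C f \<in> cObj C) \<and>
     (\<forall>a\<in>cObj C. cId C a \<in> cArr C \<and> cDom C (cId C a) = a \<and> cCod C (cId C a) = a) \<and>
     (\<forall>f\<in>cArr C. \<forall>g\<in>cArr C. cCod C f = cDom C g \<longrightarrow>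
        cComp C g f \<in> cArr C \<and> cDom C (cComp C g f) = cDom C f \<and> cCod C (cComp C g f) = cCod C g) \<and>
     (\<forall>f\<in>cArr C. cComp C (cId C (cCod C f)) f = f \<and> cComp C f (cId C (cDom C f)) = f) \<and>
     (\<forall>f\<in>cArr C. \<forall>g\<in>cArr C. \<forall>h\<in>cArr C. cCod C f = cDom C g \<longrightarrow> cCod C g = cDom C h \<longrightarrow>
        cComp C h (cComp C g f) = cComp C (cComp C h g) f)"

definition is_functor :: "('a, 'b) cat \<Rightarrow> ('c, 'd) cat \<Rightarrow> ('a \<Rightarrow> 'c) \<Rightarrow> ('b \<Rightarrow> 'd) \<Rightarrow> bool" where
  "is_functor C D Fo Fa \<longleftrightarrow>
     (\<forall>a\<in>cObj C. Fo a \<in> cObj D) \<and>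
     (\<forall>f\<in>cArr C. Fa f \<in> cArr D \<and> cDom D (Fa f) = Fo (cDom C f) \<and> cCod D (Fa f) = Fo (cCod C f)) \<and>
     (\<forall>a\<in>cObj C. Fa (cId C a) = cId D (Fo a)) \<and>
     (\<forall>f\<in>cArr C. \<forall>g\<in>cArr C. cCod C f = cDom C g \<longrightarrow> Fa (cComp C g f) = cComp D (Fa g) (Fa f))"

definition ord_cat :: "nat \<Rightarrow> (nat, nat \<times> nat) cat" where
  "ord_cat n = \<lparr> cObj = {..<n}, cArr = {(i, j). i \<le> j \<and> j < n},
                 cDom = fst, cCod = snd, cId = (\<lambda>i. (i, i)),
                 cComp = (\<lambda>g f. (fst f, snd g)) \<rparr>"

definition is_identity :: "('o, 'm) cat \<Rightarrow> 'm \<Rightarrow> bool" where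
  "is_identity C f \<longleftrightarrow> f = cId C (cDom C f)"

definition flag :: "('o, 'm) cat \<Rightarrow> 'm \<Rightarrow> bool" where
  "flag C f \<longleftrightarrow> f \<in> cArr C \<and> \<not> is_identity C f"

definition irreducible_flag :: "('o, 'm) cat \<Rightarrow> 'm \<Rightarrow> bool" where
  "irreducible_flag C f \<longleftrightarrow> flag C f \<and>
     \<not> (\<exists>g h. flag C g \<and> flag C h \<and> cCod C h = cDom C g \<and> f = cComp C g h)"

definition nested_graph :: "('o, 'm) cat \<Rightarrow> bool" where
  "nested_graph C \<longleftrightarrow> category C \<and>
     (\<exists>n Go Ga. is_functor C (ord_cat n) Go Ga \<and>
        (\<forall>f. flag C f \<longrightarrow> flag (ord_cat n) (Ga f)))"

definition contracts :: "('c, 'd) cat \<Rightarrow> ('b \<Rightarrow> 'd) \<Rightarrow> 'b \<Rightarrow> bool" where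
  "contracts D Fa f \<longleftrightarrow> is_identity D (Fa f)"

definition admissible ::
  "('a, 'b) cat \<Rightarrow> ('c, 'd) cat \<Rightarrow> ('a \<Rightarrow> 'c) \<Rightarrow> ('b \<Rightarrow> 'd) \<Rightarrow> bool" where
  "admissible C D Fo Fa \<longleftrightarrow> is_functor C D Fo Fa \<and>
     (\<forall>f. irreducible_flag C f \<longrightarrow> is_identity D (Fa f) \<or> irreducible_flag D (Fa f)) \<and>
     (\<forall>f. irreducible_flag C f \<longrightarrow> contracts D Fa f \<longrightarrow>
        (\<forall>f'. irreducible_flag C f' \<and> cDom C f' = cDom C f \<longrightarrow> contracts D Fa f'))"

end

theory Submission
  imports Defs
begin

lemma id_pres:
  assumes F: "is_functor C D Fo Fa" and C: "category C" and D: "category D"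
    and f: "f \<in> cArr C" and idf: "is_identity C f"
  shows "is_identity D (Fa f)"
proof -
  have a: "cDom C f \<in> cObj C" using C f unfolding category_def by blast
  have "Fa f = cId D (Fo (cDom C f))" using F a idf unfolding is_functor_def is_identity_def by metis
  moreover have "Fo (cDom C f) \<in> cObj D" using F a unfolding is_functor_def by blast
  ultimately show ?thesis using D unfolding is_identity_def category_def by auto
qed

theorem mainTheorem1:
  fixes N1 :: "('a, 'b) cat" and N2 :: "('c, 'd) cat" and N3 :: "('e, 'f) cat"
    and \<phi>o :: "'a \<Rightarrow> 'c" and \<phi>a :: "'b \<Rightarrow> 'd"
    and \<psi>o :: "'c \<Rightarrow> 'e" and \<psi>a :: "'d \<Rightarrow> 'f"
  assumes "nested_graph N1" and "nested_graph N2" and "nested_graph N3"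
    and "admissible N1 N2 \<phi>o \<phi>a"
    and "admissible N2 N3 \<psi>o \<psi>a"
  shows "admissible N1 N3 (\<psi>o \<circ> \<phi>o) (\<psi>a \<circ> \<phi>a)"
proof -
  have C1: "category N1" and C2: "category N2" and C3: "category N3"
    using assms(1-3) unfolding nested_graph_def by auto
  have F: "is_functor N1 N2 \<phi>o \<phi>a" and G: "is_functor N2 N3 \<psi>o \<psi>a"
    using assms(4,5) unfolding admissible_def by auto
  have FG: "is_functor N1 N3 (\<psi>o \<circ> \<phi>o) (\<psi>a \<circ> \<phi>a)"
    using F G unfolding is_functor_def by (auto simp: category_def)
  have A1: "\<And>f. irreducible_flag N1 f \<Longrightarrow> is_identity N2 (\<phi>a f) \<or> irreducible_flag N2 (\<phi>a f)"
    using assms(4) unfolding admissible_def by blast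
  have A2: "\<And>f. irreducible_flag N2 f \<Longrightarrow> is_identity N3 (\<psi>a f) \<or> irreducible_flag N3 (\<psi>a f)"
    using assms(5) unfolding admissible_def by blast
  have B1: "\<And>f f'. irreducible_flag N1 f \<Longrightarrow> contracts N2 \<phi>a f \<Longrightarrow> irreducible_flag N1 f'
      \<Longrightarrow> cDom N1 f' = cDom N1 f \<Longrightarrow> contracts N2 \<phi>a f'"
    using assms(4) unfolding admissible_def by blast
  have B2: "\<And>f f'. irreducible_flag N2 f \<Longrightarrow> contracts N3 \<psi>a f \<Longrightarrow> irreducible_flag N2 f'
      \<Longrightarrow> cDom N2 f' = cDom N2 f \<Longrightarrow> contracts N3 \<psi>a f'"
    using assms(5) unfolding admissible_def by blast
  have arr1: "\<And>f. irreducible_flag N1 f \<Longrightarrow> \<phi>a f \<in> cArr N2"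
    using F unfolding irreducible_flag_def flag_def is_functor_def by blast
  have arr2: "\<And>f. irreducible_flag N2 f \<Longrightarrow> f \<in> cArr N2"
    unfolding irreducible_flag_def flag_def by blast
  have idG: "\<And>g. g \<in> cArr N2 \<Longrightarrow> is_identity N2 g \<Longrightarrow> is_identity N3 (\<psi>a g)"
    using id_pres[OF G C2 C3] by blast
  have P1: "\<forall>f. irreducible_flag N1 f \<longrightarrow> is_identity N3 ((\<psi>a \<circ> \<phi>a) f) \<or> irreducible_flag N3 ((\<psi>a \<circ> \<phi>a) f)"
  proof (intro allI impI)
    fix f assume f: "irreducible_flag N1 f"
    show "is_identity N3 ((\<psi>a \<circ> \<phi>a) f) \<or> irreducible_flag N3 ((\<psi>a \<circ> \<phi>a) f)"
      using A1[OF f] idG[OF arr1[OF f]] A2 by auto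
  qed
  have P2: "\<forall>f. irreducible_flag N1 f \<longrightarrow> contracts N3 (\<psi>a \<circ> \<phi>a) f \<longrightarrow>
        (\<forall>f'. irreducible_flag N1 f' \<and> cDom N1 f' = cDom N1 f \<longrightarrow> contracts N3 (\<psi>a \<circ> \<phi>a) f')"
  proof (intro allI impI, elim conjE)
    fix f f' assume f: "irreducible_flag N1 f" and c: "contracts N3 (\<psi>a \<circ> \<phi>a) f"
      and f': "irreducible_flag N1 f'" and d: "cDom N1 f' = cDom N1 f"
    show "contracts N3 (\<psi>a \<circ> \<phi>a) f'"
    proof (cases "is_identity N2 (\<phi>a f)")
      case True
      hence "contracts N2 \<phi>a f" unfolding contracts_def .
      hence "is_identity N2 (\<phi>a f')" using B1[OF f _ f' d] unfolding contracts_def by blast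
      thus ?thesis using idG[OF arr1[OF f']] unfolding contracts_def by simp
    next
      case False
      hence irr: "irreducible_flag N2 (\<phi>a f)" using A1[OF f] by blast
      show ?thesis
      proof (cases "is_identity N2 (\<phi>a f')")
        case True
        thus ?thesis using idG[OF arr1[OF f']] unfolding contracts_def by simp
      next
        case False
        hence irr': "irreducible_flag N2 (\<phi>a f')" using A1[OF f'] by blast
        have f1: "f \<in> cArr N1" and f1': "f' \<in> cArr N1" using f f' unfolding irreducible_flag_def flag_def by auto
        have "cDom N2 (\<phi>a f') = cDom N2 (\<phi>a f)"
          using F f1 f1' d unfolding is_functor_def by metis
        moreover have "contracts N3 \<psi>a (\<phi>a f)" using c unfolding contracts_def by simp
        ultimately have "contracts N3 \<psi>a (\<phi>a f')" using B2[OF irr _ irr'] by blast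
        thus ?thesis unfolding contracts_def by simp
      qed
    qed
  qed
  show ?thesis unfolding admissible_def using FG P1 P2 by blast
qed

end
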